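(* Let $\mathcal{G}_n=\mathcal{G}(\mathcal{X}_n\cup\{S,T\};r_n)$ be a random geometric graph with $r_n=\omega(1)\left(\frac{\log n}{n}\right)^{1/d}$. Then $\mathcal{G}_n$ contains a monotone path $\vec\sigma_n\in \Sigma(S,T)$ such that $\mathcal{M}(\vec\sigma_n)=(1+o(1))\mathcal{M}(\vec\sigma^* )$, almost surely.
   Context: Fix a dimension $d\geq 2$. Let $\mathcal{M}:[0,1]^d\rightarrow \mathbb{R}$ be a cost map and $S,T\in[0,1]^d$ start and target points. $\Sigma(S,T)$ denotes the set of continuous paths $\sigma:[0,1]\rightarrow[0,1]^d$ with $\sigma(0)=S$, $\sigma(1)=T$, and the bottleneck cost of a path is $\mathcal{M}(\sigma)=\max_{\tau\in[0,1]}\mathcal{M}(\sigma(\tau))$. For $p=(p_1,\dots,p_d)$, $p'=(p'_1,\dots,p'_d)$, write $p\preceq p'$ if $p_i\leq p'_i$ for all $i$; a path $\sigma$ is monotone if $\sigma(\tau)\preceq\sigma(\tau')$ whenever $0\leq\tau\leq\tau'\leq 1$. For $x\preceq x'$, write $x\preceq_\delta x'$ when $\delta=\min_i\{x'_i-x_i\}$. Let $\mathcal{B}_r(x)$ be the Euclidean ball of radius $r$ around $x$, $\mathcal{B}_r(\sigma)=\bigcup_{\tau\in[0,1]}\mathcal{B}_r(\sigma(\tau))$, and $\textup{Im}(\sigma)$ the image of $\sigma$. A path $\sigma\in\Sigma(S,T)$ is robust if for every $\varepsilon>0$ there is $\delta>0$ such that $\mathcal{M}(\sigma')\leq(1+\varepsilon)\mathcal{M}(\sigma)$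 for every $\sigma'\in\Sigma(S,T)$ with $\textup{Im}(\sigma')\subset\mathcal{B}_\delta(\sigma)$. Let $\vec\sigma^*$ be a robustly-optimal monotone path, i.e., a monotone robust path attaining the infimum bottleneck cost over all such paths. Assume there is a constant $\delta'>0$ with $\mathcal{B}_{\delta'}(\vec\sigma^* )\subset[0,1]^d$, and a constant $0<\delta''\leq 1$ with $S\preceq_{\delta''}T$. Let $\mathcal{X}_n$ be $n$ points drawn independently and uniformly at random from $[0,1]^d$. The random geometric graph $\mathcal{G}(\mathcal{X};r_n)$ is the directed graph on vertex set $\mathcal{X}$ with an edge $(x,y)$ for all distinct $x,y\in\mathcal{X}$ with $\|x-y\|_2\leq r_n$; each edge is viewed as the straight-line segment between its endpoints, so a path in the graph is a polygonal curve, and it is monotone if consecutive vertices satisfy $x\preceq y$. An event holds almost surely (a.s.) if its probability tends to $1$ as $n\rightarrow\infty$. Logarithms are natural. *)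

theory Defs
  imports "HOL-Probability.Probability"
begin

text \<open>Points of [0,1]^d are vectors in real^'d, d = CARD('d).\<close>

definition unit_cube :: "(real^'d) set" where
  "unit_cube = cbox 0 1"

definition preceq :: "real^'d \<Rightarrow> real^'d \<Rightarrow> bool" where
  "preceq x y \<longleftrightarrow> (\<forall>i. x$i \<le> y$i)"

definition preceq_delta :: "real^'d \<Rightarrow> real \<Rightarrow> real^'d \<Rightarrow> bool" where
  "preceq_delta x \<delta> y \<longleftrightarrow> preceq x y \<and> \<delta> = Min (range (\<lambda>i. y$i - x$i))"

definition Sigma_paths :: "real^'d \<Rightarrow> real^'d \<Rightarrow> (real \<Rightarrow> real^'d) set" where
  "Sigma_paths S T = {\<sigma>. path \<sigma> \<and> path_image \<sigma> \<subseteq> unit_cube \<and> pathstart \<sigma> = S \<and> pathfinish \<sigma> = T}"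

text \<open>Bottleneck cost, valued in extended reals (the max/sup may be infinite).\<close>
definition bcost :: "(real^'d \<Rightarrow> real) \<Rightarrow> (real \<Rightarrow> real^'d) \<Rightarrow> ereal" where
  "bcost M \<sigma> = (SUP \<tau>\<in>{0..1}. ereal (M (\<sigma> \<tau>)))"

definition mono_path :: "(real \<Rightarrow> real^'d) \<Rightarrow> bool" where
  "mono_path \<sigma> \<longleftrightarrow> (\<forall>\<tau> \<tau>'. 0 \<le> \<tau> \<longrightarrow> \<tau> \<le> \<tau>' \<longrightarrow> \<tau>' \<le> 1 \<longrightarrow> preceq (\<sigma> \<tau>) (\<sigma> \<tau>'))"

definition tube :: "real \<Rightarrow> (real \<Rightarrow> real^'d) \<Rightarrow> (real^'d) set" where
  "tube r \<sigma> = (\<Union>\<tau>\<in>{0..1}. ball (\<sigma> \<tau>) r)"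

definition robust :: "(real^'d \<Rightarrow> real) \<Rightarrow> real^'d \<Rightarrow> real^'d \<Rightarrow> (real \<Rightarrow> real^'d) \<Rightarrow> bool" where
  "robust M S T \<sigma> \<longleftrightarrow> \<sigma> \<in> Sigma_paths S T \<and>
     (\<forall>\<epsilon>>0. \<exists>\<delta>>0. \<forall>\<sigma>'\<in>Sigma_paths S T.
        path_image \<sigma>' \<subseteq> tube \<delta> \<sigma> \<longrightarrow> bcost M \<sigma>' \<le> ereal (1 + \<epsilon>) * bcost M \<sigma>)"

definition robustly_optimal_monotone ::
  "(real^'d \<Rightarrow> real) \<Rightarrow> real^'d \<Rightarrow> real^'d \<Rightarrow> (real \<Rightarrow> real^'d) \<Rightarrow> bool" where
  "robustly_optimal_monotone M S T \<sigma> \<longleftrightarrow> robust M S T \<sigma> \<and> mono_path \<sigma> \<and>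
     bcost M \<sigma> = (INF \<sigma>'\<in>{\<sigma>'. robust M S T \<sigma>' \<and> mono_path \<sigma>'}. bcost M \<sigma>')"

definition rgg_edge :: "(real^'d) set \<Rightarrow> real \<Rightarrow> real^'d \<Rightarrow> real^'d \<Rightarrow> bool" where
  "rgg_edge V r x y \<longleftrightarrow> x \<in> V \<and> y \<in> V \<and> x \<noteq> y \<and> dist x y \<le> r"

definition mono_graph_path :: "(real^'d) set \<Rightarrow> real \<Rightarrow> real^'d \<Rightarrow> real^'d \<Rightarrow> (real^'d) list \<Rightarrow> bool" where
  "mono_graph_path V r S T vs \<longleftrightarrow> vs \<noteq> [] \<and> hd vs = S \<and> last vs = T \<and>
     (\<forall>i. Suc i < length vs \<longrightarrow> rgg_edge V r (vs!i) (vs!Suc i) \<and> preceq (vs!i) (vs!Suc i))"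

fun polygonal :: "'a::real_normed_vector list \<Rightarrow> real \<Rightarrow> 'a" where
  "polygonal [] = linepath 0 0"
| "polygonal [x] = linepath x x"
| "polygonal [x, y] = linepath x y"
| "polygonal (x # y # z # zs) = linepath x y +++ polygonal (y # z # zs)"

definition sample_space :: "nat \<Rightarrow> (nat \<Rightarrow> real^'d) measure" where
  "sample_space n = PiM {..<n} (\<lambda>_. uniform_measure lborel unit_cube)"

text \<open>Inner probability (so that events need not be shown measurable a priori).\<close>
definition inner_prob :: "'a measure \<Rightarrow> 'a set \<Rightarrow> real" where
  "inner_prob P A = Sup (measure P ` {B \<in> sets P. B \<subseteq> A})"

end

theory Submission
  imports Defs
begin

lemma cube_meas: "emeasure lborel (unit_cube :: (real^'d) set) = 1"
  unfolding unit_cube_def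
  by (auto simp add: emeasure_lborel_cbox_eq Basis_vec_def inner_axis intro!: prod.neutral)

lemma U_prob: "prob_space (uniform_measure lborel (unit_cube :: (real^'d) set))"
  by (rule prob_space_uniform_measure) (simp_all add: cube_meas)

lemma P_prob: "prob_space (sample_space n :: (nat \<Rightarrow> real^'d) measure)"
  unfolding sample_space_def by (rule prob_space_PiM) (rule U_prob)

lemma space_P: "space (sample_space n :: (nat \<Rightarrow> real^'d) measure) = PiE {..<n} (\<lambda>_. UNIV)"
  unfolding sample_space_def by (simp add: space_PiM)

lemma ev_meas:
  fixes Q :: "nat \<Rightarrow> (real^'d) set"
  assumes "\<And>k. k \<in> K \<Longrightarrow> Q k \<in> sets borel" "finite K"
  shows "{\<omega> \<in> space (sample_space n). \<forall>k\<in>K. \<exists>j<n. \<omega> j \<in> Q k} \<in> sets (sample_space n)"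
  unfolding sample_space_def using assms by measurable


lemma enn2real_pow: "enn2real (x ^ n) = enn2real x ^ n"
  by (induction n) (auto simp: enn2real_mult)

lemma prob_bound:
  fixes Q :: "nat \<Rightarrow> (real^'d) set"
  assumes Qs: "\<And>k. k \<in> K \<Longrightarrow> Q k \<in> sets borel" and fin: "finite K"
    and Qc: "\<And>k. k \<in> K \<Longrightarrow> Q k \<subseteq> unit_cube"
    and Qm: "\<And>k. k \<in> K \<Longrightarrow> measure lborel (Q k) \<ge> b"
  shows "measure (sample_space n) {\<omega> \<in> space (sample_space n). \<forall>k\<in>K. \<exists>j<n. \<omega> j \<in> Q k}
     \<ge> 1 - real (card K) * (1 - b) ^ n"
proof -
  let ?U = "uniform_measure lborel (unit_cube :: (real^'d) set)"
  let ?P = "sample_space n :: (nat \<Rightarrow> real^'d) measure"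
  let ?B = "{\<omega> \<in> space ?P. \<forall>k\<in>K. \<exists>j<n. \<omega> j \<in> Q k}"
  interpret P: prob_space ?P by (rule P_prob)
  interpret U: prob_space ?U by (rule U_prob)
  interpret PP: product_prob_space "\<lambda>_. ?U" "{..<n}" by unfold_locales
  have Bm: "?B \<in> sets ?P" by (rule ev_meas[OF Qs fin])
  define F where "F k = PiE {..<n} (\<lambda>_. UNIV - Q k)" for k
  have cmp: "space ?P - ?B = (\<Union>k\<in>K. F k)"
    unfolding space_P F_def by (auto simp: PiE_iff)
  have uc: "unit_cube \<in> sets (lborel :: (real^'d) measure)" unfolding unit_cube_def by simp
  have Fm: "measure ?P (F k) \<le> (1 - b) ^ n" if k: "k \<in> K" for k
  proof -
    have e: "emeasure ?P (F k) = (\<Prod>j\<in>{..<n}. emeasure ?U (UNIV - Q k))"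
      unfolding F_def sample_space_def using Qs[OF k]
      by (subst PP.emeasure_PiM) auto
    have mU: "measure ?U (Q k) = measure lborel (Q k)"
    proof -
      have "emeasure ?U (Q k) = emeasure lborel (unit_cube \<inter> Q k) / emeasure lborel (unit_cube :: (real^'d) set)"
        using Qs[OF k] uc by (subst emeasure_uniform_measure) auto
      also have "\<dots> = emeasure lborel (Q k)" using Qc[OF k] cube_meas[where 'd='d]
        by (simp add: Int_absorb1 divide_ennreal_def)
      finally show ?thesis by (simp add: measure_def)
    qed
    have "measure ?U (UNIV - Q k) = 1 - measure ?U (Q k)"
      using U.prob_compl[of "Q k"] Qs[OF k] by simp
    hence mc: "measure ?U (UNIV - Q k) = 1 - measure lborel (Q k)" using mU by simp
    have "measure ?P (F k) = (\<Prod>j\<in>{..<n}. measure ?U (UNIV - Q k))"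
      using e by (simp add: measure_def enn2real_pow)
    also have "\<dots> = (1 - measure lborel (Q k)) ^ n" using mc by simp
    also have "\<dots> \<le> (1 - b) ^ n"
    proof (rule power_mono)
      show "1 - measure lborel (Q k) \<le> 1 - b" using Qm[OF k] by simp
      show "0 \<le> 1 - measure lborel (Q k)" using mc measure_nonneg[of ?U "UNIV - Q k"] by linarith
    qed
    finally show ?thesis .
  qed
  have Fs: "F k \<in> sets ?P" if "k \<in> K" for k
    unfolding F_def sample_space_def using Qs[OF that]
    by (intro sets_PiM_I_finite) auto
  have "measure ?P (space ?P - ?B) \<le> (\<Sum>k\<in>K. measure ?P (F k))"
    unfolding cmp using Fs fin by (intro P.finite_measure_subadditive_finite) auto
  also have "\<dots> \<le> (\<Sum>k\<in>K. (1 - b) ^ n)" using Fm by (intro sum_mono) auto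
  finally have "measure ?P (space ?P - ?B) \<le> real (card K) * (1 - b) ^ n" by simp
  moreover have "measure ?P (space ?P - ?B) = 1 - measure ?P ?B"
    using P.prob_compl[OF Bm] .
  ultimately show ?thesis by simp
qed


lemma poly_props:
  "length xs \<ge> 2 \<Longrightarrow> path (polygonal xs) \<and> pathstart (polygonal xs) = hd xs \<and>
     pathfinish (polygonal xs) = last xs \<and>
     path_image (polygonal xs) \<subseteq> (\<Union>i\<in>{i. Suc i < length xs}. closed_segment (xs!i) (xs!Suc i))"
proof (induction xs rule: polygonal.induct)
  case (4 x y z zs)
  have IH: "path (polygonal (y # z # zs)) \<and> pathstart (polygonal (y # z # zs)) = y \<and>
     pathfinish (polygonal (y # z # zs)) = last (y # z # zs) \<and>
     path_image (polygonal (y # z # zs)) \<subseteq> (\<Union>i\<in>{i. Suc i < length (y # z # zs)}. closed_segment ((y # z # zs)!i) ((y # z # zs)!Suc i))"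
    using 4 by simp
  have "path_image (polygonal (x # y # z # zs)) \<subseteq> closed_segment x y \<union> path_image (polygonal (y # z # zs))"
    using path_image_join_subset[of "linepath x y" "polygonal (y # z # zs)"] by simp
  also have "\<dots> \<subseteq> (\<Union>i\<in>{i. Suc i < length (x # y # z # zs)}. closed_segment ((x # y # z # zs)!i) ((x # y # z # zs)!Suc i))"
  proof
    fix w assume "w \<in> closed_segment x y \<union> path_image (polygonal (y # z # zs))"
    then show "w \<in> (\<Union>i\<in>{i. Suc i < length (x # y # z # zs)}. closed_segment ((x # y # z # zs)!i) ((x # y # z # zs)!Suc i))"
    proof
      assume "w \<in> closed_segment x y" then show ?thesis by (intro UN_I[of 0]) auto
    next
      assume "w \<in> path_image (polygonal (y # z # zs))"
      with IH obtain i where "Suc i < length (y # z # zs)" "w \<in> closed_segment ((y # z # zs)!i) ((y # z # zs)!Suc i)"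
        by blast
      then show ?thesis by (intro UN_I[of "Suc i"]) auto
    qed
  qed
  finally show ?case using IH by simp
qed auto


lemma levels:
  fixes \<sigma> :: "real \<Rightarrow> real^'d"
  assumes "path \<sigma>" "\<sigma> 0 = S" "\<sigma> 1 = T" "N > 0" "preceq S T"
  shows "\<exists>t. t 0 = 0 \<and> t N = 1 \<and> (\<forall>k\<le>N. 0 \<le> t k \<and> t k \<le> 1 \<and>
     (\<Sum>i\<in>UNIV. \<sigma> (t k) $ i) = (\<Sum>i\<in>UNIV. S$i) + real k / real N * (\<Sum>i\<in>UNIV. T$i - S$i))"
proof -
  let ?\<psi> = "\<lambda>x. \<Sum>i\<in>UNIV. \<sigma> x $ i"
  have c: "continuous_on {0..1} ?\<psi>" using assms(1) unfolding path_def
    by (intro continuous_intros) auto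
  have L0: "0 \<le> (\<Sum>i\<in>UNIV. T$i - S$i)" using assms(5) unfolding preceq_def
    by (intro sum_nonneg) auto
  have "\<forall>k. \<exists>x. k \<le> N \<longrightarrow> ((k = 0 \<longrightarrow> x = 0) \<and> (k = N \<longrightarrow> x = 1) \<and> 0 \<le> x \<and> x \<le> 1 \<and>
     ?\<psi> x = (\<Sum>i\<in>UNIV. S$i) + real k / real N * (\<Sum>i\<in>UNIV. T$i - S$i))"
  proof (intro allI)
    fix k
    show "\<exists>x. k \<le> N \<longrightarrow> ((k = 0 \<longrightarrow> x = 0) \<and> (k = N \<longrightarrow> x = 1) \<and> 0 \<le> x \<and> x \<le> 1 \<and>
     ?\<psi> x = (\<Sum>i\<in>UNIV. S$i) + real k / real N * (\<Sum>i\<in>UNIV. T$i - S$i))"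
    proof (cases "k = 0")
      case True then show ?thesis using assms by (intro exI[of _ 0]) auto
    next
      case k0: False
      show ?thesis
      proof (cases "k = N")
        case True then show ?thesis using assms
          by (intro exI[of _ 1]) (auto simp: sum_subtractf)
      next
        case False
        show ?thesis
        proof (cases "k \<le> N")
          case kN: True
          let ?y = "(\<Sum>i\<in>UNIV. S$i) + real k / real N * (\<Sum>i\<in>UNIV. T$i - S$i)"
          have fr: "0 \<le> real k / real N" "real k / real N \<le> 1" using kN assms(4) by auto
          have "?\<psi> 0 \<le> ?y" using assms(2) fr L0 by simp
          moreover have "?y \<le> ?\<psi> 1"
          proof -
            have "real k / real N * (\<Sum>i\<in>UNIV. T$i - S$i) \<le> 1 * (\<Sum>i\<in>UNIV. T$i - S$i)"
              using fr L0 by (intro mult_right_mono) auto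
            then show ?thesis using assms(3) by (simp add: sum_subtractf)
          qed
          ultimately obtain x where "0 \<le> x" "x \<le> 1" "?\<psi> x = ?y"
            using IVT'[of ?\<psi> 0 ?y 1] c by auto
          then show ?thesis using k0 False by (intro exI[of _ x]) auto
        next
          case False then show ?thesis by auto
        qed
      qed
    qed
  qed
  then obtain t where t: "\<forall>k. k \<le> N \<longrightarrow> ((k = 0 \<longrightarrow> t k = 0) \<and> (k = N \<longrightarrow> t k = 1) \<and> 0 \<le> t k \<and> t k \<le> 1 \<and>
     ?\<psi> (t k) = (\<Sum>i\<in>UNIV. S$i) + real k / real N * (\<Sum>i\<in>UNIV. T$i - S$i))"
    using choice[OF \<open>\<forall>k. \<exists>x. _\<close>] by blast
  have "t 0 = 0" using t[rule_format, of 0] by simp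
  moreover have "t N = 1" using t[rule_format, of N] by simp
  moreover have "\<forall>k\<le>N. 0 \<le> t k \<and> t k \<le> 1 \<and>
     ?\<psi> (t k) = (\<Sum>i\<in>UNIV. S$i) + real k / real N * (\<Sum>i\<in>UNIV. T$i - S$i)"
    using t by blast
  ultimately show ?thesis by blast
qed

lemma mono_by_sum:
  fixes \<sigma> :: "real \<Rightarrow> real^'d"
  assumes "mono_path \<sigma>" "0 \<le> a" "a \<le> 1" "0 \<le> b" "b \<le> 1"
    and "(\<Sum>i\<in>UNIV. \<sigma> a $ i) \<le> (\<Sum>i\<in>UNIV. \<sigma> b $ i)"
  shows "preceq (\<sigma> a) (\<sigma> b)"
proof (cases "a \<le> b")
  case True then show ?thesis using assms unfolding mono_path_def by auto
next
  case False
  then have ba: "\<And>i. \<sigma> b $ i \<le> \<sigma> a $ i" using assms unfolding mono_path_def preceq_def by auto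
  have "\<sigma> b $ i = \<sigma> a $ i" for i
  proof (rule ccontr)
    assume "\<sigma> b $ i \<noteq> \<sigma> a $ i"
    then have "\<sigma> b $ i < \<sigma> a $ i" using ba[of i] by auto
    then have "(\<Sum>i\<in>UNIV. \<sigma> b $ i) < (\<Sum>i\<in>UNIV. \<sigma> a $ i)"
      using ba by (intro sum_strict_mono_ex1) auto
    then show False using assms(6) by simp
  qed
  then show ?thesis unfolding preceq_def by simp
qed


lemma det_geom:
  fixes \<sigma> :: "real \<Rightarrow> real^'d" and t :: "nat \<Rightarrow> real" and v p :: "nat \<Rightarrow> real^'d"
  assumes pin: "path_image \<sigma> \<subseteq> unit_cube" and S_in: "S \<in> unit_cube" and T_in: "T \<in> unit_cube"
    and mono: "mono_path \<sigma>"
    and ST: "\<And>i. \<delta>'' \<le> T$i - S$i" and dpos: "0 < \<delta>''"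
    and N: "N > 0"
    and t0: "t 0 = 0" and tN: "t N = 1"
    and tk: "\<And>k. k \<le> N \<Longrightarrow> 0 \<le> t k \<and> t k \<le> 1 \<and>
       (\<Sum>i\<in>UNIV. \<sigma> (t k) $ i) = (\<Sum>i\<in>UNIV. S$i) + real k / real N * (\<Sum>i\<in>UNIV. T$i - S$i)"
    and s0: "\<sigma> 0 = S" and s1: "\<sigma> 1 = T"
    and lam: "0 < lm" "lm \<le> 1"
    and a: "0 \<le> a" "a < lm * \<delta>'' / N"
    and p_def: "p = (\<lambda>k. (1 - lm) *\<^sub>R \<sigma> (t k) + lm *\<^sub>R (S + (real k / real N) *\<^sub>R (T - S)))"
    and v: "\<And>k. k \<le> N \<Longrightarrow> v k \<in> cbox (p k) (\<chi> i. p k $ i + a)"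
  shows "p 0 = S" "p N = T"
    "\<And>k i. k < N \<Longrightarrow> v k $ i < v (Suc k) $ i"
    "\<And>k. k < N \<Longrightarrow> dist (v k) (v (Suc k)) \<le> (\<Sum>i\<in>UNIV. T$i - S$i) / N + 2 * real CARD('d) * a"
    "\<And>k. k \<le> N \<Longrightarrow> dist (v k) (\<sigma> (t k)) \<le> real CARD('d) * a + lm * real CARD('d)"
proof -
  define L where "L = (\<Sum>i\<in>UNIV. T$i - S$i)"
  define D where "D = real CARD('d)"
  let ?u = "\<lambda>k. \<sigma> (t k)"
  have pc: "p k $ i = (1 - lm) * ?u k $ i + lm * (S$i + real k / real N * (T$i - S$i))" for k i
    unfolding p_def by simp
  show p0: "p 0 = S" unfolding p_def t0 s0 by (simp add: algebra_simps)
  show pN: "p N = T" unfolding p_def tN s1 using N by (simp add: algebra_simps)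
  have cube: "x \<in> unit_cube \<longleftrightarrow> (\<forall>i. 0 \<le> x$i \<and> x$i \<le> 1)" for x :: "real^'d"
    unfolding unit_cube_def by (simp add: mem_box_cart)
  have uin: "?u k \<in> unit_cube" if "k \<le> N" for k
    using pin tk[OF that] unfolding path_image_def by auto
  have STi: "0 \<le> T$i - S$i" for i using ST[of i] dpos by linarith
  have L0: "0 \<le> L" unfolding L_def using STi by (intro sum_nonneg) auto
  have usum: "(\<Sum>i\<in>UNIV. ?u (Suc k) $ i - ?u k $ i) = L / N" if "k < N" for k
  proof -
    have "(\<Sum>i\<in>UNIV. ?u (Suc k) $ i - ?u k $ i) = (\<Sum>i\<in>UNIV. ?u (Suc k) $ i) - (\<Sum>i\<in>UNIV. ?u k $ i)"
      by (simp add: sum_subtractf)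
    also have "\<dots> = real (Suc k) / real N * L - real k / real N * L"
      using tk[of k] tk[of "Suc k"] that unfolding L_def by simp
    also have "\<dots> = L / N" by (simp add: field_simps add_divide_distrib)
    finally show ?thesis .
  qed
  have umono: "?u k $ i \<le> ?u (Suc k) $ i" if "k < N" for k i
  proof -
    have "preceq (?u k) (?u (Suc k))"
    proof (rule mono_by_sum[OF mono])
      show "0 \<le> t k" "t k \<le> 1" "0 \<le> t (Suc k)" "t (Suc k) \<le> 1" using tk[of k] tk[of "Suc k"] that by auto
      show "(\<Sum>i\<in>UNIV. ?u k $ i) \<le> (\<Sum>i\<in>UNIV. ?u (Suc k) $ i)"
        using usum[OF that] divide_nonneg_nonneg[OF L0 of_nat_0_le_iff[of N]] by (simp add: sum_subtractf)
    qed
    then show ?thesis unfolding preceq_def by auto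
  qed
  have pdiff: "p (Suc k) $ i - p k $ i = (1 - lm) * (?u (Suc k) $ i - ?u k $ i) + lm / N * (T$i - S$i)"
    if "k < N" for k i
    unfolding pc using N by (simp add: field_simps)
  have plow: "lm * \<delta>'' / N \<le> p (Suc k) $ i - p k $ i" if "k < N" for k i
  proof -
    have "0 \<le> (1 - lm) * (?u (Suc k) $ i - ?u k $ i)" using lam umono[OF that] by simp
    moreover have "lm * \<delta>'' / N \<le> lm / N * (T$i - S$i)"
      using ST[of i] lam N by (simp add: divide_right_mono mult_left_mono)
    ultimately show ?thesis using pdiff[OF that] by simp
  qed
  have vbox: "p k $ i \<le> v k $ i \<and> v k $ i \<le> p k $ i + a" if "k \<le> N" for k i
    using v[OF that] by (simp add: mem_box_cart)
  show "v k $ i < v (Suc k) $ i" if "k < N" for k i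
  proof -
    have "v k $ i \<le> p k $ i + a" using vbox[of k i] that by simp
    also have "\<dots> < p k $ i + lm * \<delta>'' / N" using a by simp
    also have "\<dots> \<le> p (Suc k) $ i" using plow[OF that, of i] by simp
    also have "\<dots> \<le> v (Suc k) $ i" using vbox[of "Suc k" i] that by simp
    finally show ?thesis .
  qed
  have vp: "dist (v k) (p k) \<le> D * a" if "k \<le> N" for k
  proof -
    have "dist (v k) (p k) \<le> (\<Sum>i\<in>UNIV. \<bar>(v k - p k) $ i\<bar>)"
      unfolding dist_norm by (rule norm_le_l1_cart)
    also have "\<dots> \<le> (\<Sum>i\<in>(UNIV::'d set). a)"
      using vbox[OF that] by (intro sum_mono) (smt (verit) vector_minus_component)
    finally show ?thesis unfolding D_def by simp
  qed
  have pp: "dist (p (Suc k)) (p k) \<le> L / N" if "k < N" for k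
  proof -
    have "dist (p (Suc k)) (p k) \<le> (\<Sum>i\<in>UNIV. \<bar>(p (Suc k) - p k) $ i\<bar>)"
      unfolding dist_norm by (rule norm_le_l1_cart)
    also have "\<dots> = (\<Sum>i\<in>UNIV. (1 - lm) * (?u (Suc k) $ i - ?u k $ i) + lm / N * (T$i - S$i))"
    proof (intro sum.cong refl)
      fix i
      have "0 \<le> lm * \<delta>'' / N" using plow[OF that, of i] a by linarith
      then show "\<bar>(p (Suc k) - p k) $ i\<bar> = (1 - lm) * (?u (Suc k) $ i - ?u k $ i) + lm / N * (T$i - S$i)"
        using plow[OF that, of i] pdiff[OF that, of i] by simp
    qed
    also have "\<dots> = (1 - lm) * (\<Sum>i\<in>UNIV. ?u (Suc k) $ i - ?u k $ i) + lm / N * L"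
      unfolding L_def by (simp add: sum.distrib sum_distrib_left)
    also have "\<dots> = L / N" using usum[OF that] by (metis add_diff_cancel_left' diff_add_cancel mult.commute mult_1 distrib_left times_divide_eq_left)
    finally show ?thesis .
  qed
  show "dist (v k) (v (Suc k)) \<le> (\<Sum>i\<in>UNIV. T$i - S$i) / N + 2 * real CARD('d) * a" if "k < N" for k
  proof -
    have "dist (v k) (v (Suc k)) \<le> dist (v k) (p k) + dist (p (Suc k)) (p k) + dist (v (Suc k)) (p (Suc k))"
      using dist_triangle[of "v k" "v (Suc k)" "p k"] dist_triangle[of "p k" "v (Suc k)" "p (Suc k)"]
        dist_commute[of "p (Suc k)" "p k"] dist_commute[of "p (Suc k)" "v (Suc k)"]
      by linarith
    also have "\<dots> \<le> D * a + L / N + D * a" using vp[of k] vp[of "Suc k"] pp[OF that] that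
      by (intro add_mono) auto
    finally show ?thesis unfolding L_def D_def by (simp add: algebra_simps)
  qed
  show "dist (v k) (\<sigma> (t k)) \<le> real CARD('d) * a + lm * real CARD('d)" if "k \<le> N" for k
  proof -
    have "dist (p k) (?u k) \<le> (\<Sum>i\<in>UNIV. \<bar>(p k - ?u k) $ i\<bar>)"
      unfolding dist_norm by (rule norm_le_l1_cart)
    also have "\<dots> \<le> (\<Sum>i\<in>(UNIV::'d set). lm)"
    proof (intro sum_mono)
      fix i
      have "(p k - ?u k) $ i = lm * ((S$i + real k / real N * (T$i - S$i)) - ?u k $ i)"
        by (simp add: pc algebra_simps)
      moreover have "0 \<le> ?u k $ i" "?u k $ i \<le> 1" using uin[OF that] cube by auto
      moreover have "0 \<le> S$i" "T$i \<le> 1" using S_in T_in cube by auto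
      moreover have "0 \<le> real k / real N" "real k / real N \<le> 1" using that N by auto
      moreover have "0 \<le> T$i - S$i" using STi .
      ultimately have eq: "(p k - ?u k) $ i = lm * ((S$i + real k / real N * (T$i - S$i)) - ?u k $ i)"
        and b: "0 \<le> ?u k $ i" "?u k $ i \<le> 1" "0 \<le> S$i" "T$i \<le> 1"
        and fr: "0 \<le> real k / real N" "real k / real N \<le> 1" and st: "0 \<le> T$i - S$i"
        by blast+
      have f1: "real k / real N * (T$i - S$i) \<le> T$i - S$i"
        using mult_left_le_one_le[OF st fr] .
      have f2: "0 \<le> real k / real N * (T$i - S$i)" using fr st by simp
      from eq b f1 f2
      have ab: "\<bar>(S$i + real k / real N * (T$i - S$i)) - ?u k $ i\<bar> \<le> 1"
        by (simp add: abs_le_iff)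
      have "\<bar>(p k - ?u k) $ i\<bar> = lm * \<bar>(S$i + real k / real N * (T$i - S$i)) - ?u k $ i\<bar>"
        unfolding eq using lam by (simp add: abs_mult)
      also have "\<dots> \<le> lm * 1" using ab lam by (intro mult_left_mono) auto
      finally show "\<bar>(p k - ?u k) $ i\<bar> \<le> lm" by simp
    qed
    finally have "dist (p k) (?u k) \<le> lm * D" unfolding D_def by (simp add: mult.commute)
    then show ?thesis using vp[OF that] dist_triangle[of "v k" "?u k" "p k"] unfolding D_def by simp
  qed
qed


lemma det_graph:
  fixes \<sigma> :: "real \<Rightarrow> real^'d" and t :: "nat \<Rightarrow> real" and p :: "nat \<Rightarrow> real^'d"
    and \<omega> :: "nat \<Rightarrow> real^'d"
  assumes pin: "path_image \<sigma> \<subseteq> unit_cube" and S_in: "S \<in> unit_cube" and T_in: "T \<in> unit_cube"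
    and mono: "mono_path \<sigma>"
    and ST: "\<And>i. \<delta>'' \<le> T$i - S$i" and dpos: "0 < \<delta>''"
    and N: "N > 0"
    and t0: "t 0 = 0" and tN: "t N = 1"
    and tk: "\<And>k. k \<le> N \<Longrightarrow> 0 \<le> t k \<and> t k \<le> 1 \<and>
       (\<Sum>i\<in>UNIV. \<sigma> (t k) $ i) = (\<Sum>i\<in>UNIV. S$i) + real k / real N * (\<Sum>i\<in>UNIV. T$i - S$i)"
    and s0: "\<sigma> 0 = S" and s1: "\<sigma> 1 = T"
    and lam: "0 < lm" "lm \<le> 1"
    and a: "0 \<le> a" "a < lm * \<delta>'' / N"
    and p_def: "p = (\<lambda>k. (1 - lm) *\<^sub>R \<sigma> (t k) + lm *\<^sub>R (S + (real k / real N) *\<^sub>R (T - S)))"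
    and hit: "\<forall>k\<in>{1..<N}. \<exists>j<n. \<omega> j \<in> cbox (p k) (\<chi> i. p k $ i + a)"
    and edge: "(\<Sum>i\<in>UNIV. T$i - S$i) / N + 2 * real CARD('d) * a \<le> r"
    and tubec: "(\<Sum>i\<in>UNIV. T$i - S$i) / N + 2 * real CARD('d) * a + (real CARD('d) * a + lm * real CARD('d)) < \<delta>"
    and tube_cube: "tube \<delta> \<sigma> \<subseteq> unit_cube"
  shows "\<exists>vs. mono_graph_path (\<omega> ` {..<n} \<union> {S, T}) r S T vs \<and> polygonal vs \<in> Sigma_paths S T \<and>
     path_image (polygonal vs) \<subseteq> tube \<delta> \<sigma>"
proof -
  define Q where "Q k = cbox (p k) (\<chi> i. p k $ i + a)" for k
  define v where "v k = (if k = 0 then S else if k = N then T else \<omega> (SOME j. j < n \<and> \<omega> j \<in> Q k))" for k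
  define V where "V = \<omega> ` {..<n} \<union> {S, T}"
  have pQ: "p k \<in> Q k" for k unfolding Q_def using a by (simp add: mem_box_cart)
  have pS: "p 0 = S" and pT: "p N = T"
    using det_geom(1,2)[OF pin S_in T_in mono ST dpos N t0 tN tk s0 s1 lam a p_def, of "\<lambda>k. p k"] pQ
    unfolding Q_def by auto
  have vQ: "v k \<in> Q k \<and> v k \<in> V" if "k \<le> N" for k
  proof (cases "k = 0 \<or> k = N")
    case True then show ?thesis using pQ pS pT unfolding v_def V_def by auto
  next
    case False
    then have "k \<in> {1..<N}" using that by auto
    then have "\<exists>j. j < n \<and> \<omega> j \<in> Q k" using hit unfolding Q_def by auto
    then have "(SOME j. j < n \<and> \<omega> j \<in> Q k) < n \<and> \<omega> (SOME j. j < n \<and> \<omega> j \<in> Q k) \<in> Q k"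
      by (rule someI_ex)
    then show ?thesis using False unfolding v_def V_def by auto
  qed
  have G: "\<And>k i. k < N \<Longrightarrow> v k $ i < v (Suc k) $ i"
    "\<And>k. k < N \<Longrightarrow> dist (v k) (v (Suc k)) \<le> (\<Sum>i\<in>UNIV. T$i - S$i) / N + 2 * real CARD('d) * a"
    "\<And>k. k \<le> N \<Longrightarrow> dist (v k) (\<sigma> (t k)) \<le> real CARD('d) * a + lm * real CARD('d)"
    using det_geom(3,4,5)[OF pin S_in T_in mono ST dpos N t0 tN tk s0 s1 lam a p_def, of v] vQ
    unfolding Q_def by auto
  define vs where "vs = map v [0..<Suc N]"
  have len: "length vs = Suc N" unfolding vs_def by simp
  have nth: "vs ! k = v k" if "k \<le> N" for k
    unfolding vs_def using that by (simp del: upt_Suc add: nth_map_upt)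
  have hd: "hd vs = S" unfolding vs_def v_def by (simp del: upt_Suc add: hd_map hd_upt)
  have lst: "last vs = T"
  proof -
    have ne: "vs \<noteq> []" using len by auto
    have "last vs = vs ! N" using len last_conv_nth[OF ne] by simp
    also have "\<dots> = T" using nth[of N] N unfolding v_def by simp
    finally show ?thesis .
  qed
  have mgp: "mono_graph_path V r S T vs"
    unfolding mono_graph_path_def
  proof (intro conjI allI impI)
    show "vs \<noteq> []" using len by auto
    show "hd vs = S" by (rule hd)
    show "last vs = T" by (rule lst)
    fix i assume i: "Suc i < length vs"
    then have iN: "i < N" using len by simp
    have e1: "vs ! i = v i" "vs ! Suc i = v (Suc i)" using nth iN by auto
    have ne: "v i \<noteq> v (Suc i)" using G(1)[OF iN, of undefined] by auto
    show "rgg_edge V r (vs ! i) (vs ! Suc i)"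
      unfolding rgg_edge_def e1 using vQ[of i] vQ[of "Suc i"] iN ne G(2)[OF iN] edge by auto
    show "preceq (vs ! i) (vs ! Suc i)"
      unfolding preceq_def e1 using G(1)[OF iN] less_imp_le by blast
  qed
  have PP: "path (polygonal vs) \<and> pathstart (polygonal vs) = hd vs \<and>
     pathfinish (polygonal vs) = last vs \<and>
     path_image (polygonal vs) \<subseteq> (\<Union>i\<in>{i. Suc i < length vs}. closed_segment (vs!i) (vs!Suc i))"
    using poly_props[of vs] len N by simp
  have img: "path_image (polygonal vs) \<subseteq> tube \<delta> \<sigma>"
  proof
    fix z assume "z \<in> path_image (polygonal vs)"
    with PP obtain i where i: "Suc i < length vs" "z \<in> closed_segment (vs!i) (vs!Suc i)" by blast
    then have iN: "i < N" using len by simp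
    have e1: "vs ! i = v i" "vs ! Suc i = v (Suc i)" using nth iN by auto
    have "dist z (v i) \<le> dist (v i) (v (Suc i))"
      using segment_bound(1)[OF i(2)[unfolded e1]] by (simp add: dist_norm norm_minus_commute)
    then have "dist z (\<sigma> (t i)) < \<delta>"
      using dist_triangle[of z "\<sigma> (t i)" "v i"] G(2)[OF iN] G(3)[of i] iN tubec by linarith
    moreover have "t i \<in> {0..1}" using tk[of i] iN by auto
    ultimately show "z \<in> tube \<delta> \<sigma>" unfolding tube_def by (auto simp: dist_commute)
  qed
  have "polygonal vs \<in> Sigma_paths S T"
    unfolding Sigma_paths_def using PP img tube_cube hd lst by auto
  then show ?thesis using mgp img unfolding V_def by blast
qed


lemma inner_ge:
  assumes "prob_space P" "B \<in> sets P" "B \<subseteq> A"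
  shows "measure P B \<le> inner_prob P A"
proof -
  interpret prob_space P by fact
  show ?thesis unfolding inner_prob_def
    by (rule cSup_upper) (use assms in \<open>auto intro!: bdd_aboveI[of _ 1]\<close>)
qed

lemma inner_le1:
  assumes "prob_space P"
  shows "inner_prob P A \<le> 1"
proof -
  interpret prob_space P by fact
  have "{} \<in> {B \<in> sets P. B \<subseteq> A}" by auto
  then show ?thesis unfolding inner_prob_def
    by (intro cSup_least) auto
qed

lemma inner_mono:
  assumes "prob_space P" "A \<subseteq> A'"
  shows "inner_prob P A \<le> inner_prob P A'"
proof -
  interpret prob_space P by fact
  have "{} \<in> {B \<in> sets P. B \<subseteq> A}" by auto
  then show ?thesis unfolding inner_prob_def using assms(2)
    by (intro cSup_subset_mono) (auto intro!: bdd_aboveI[of _ 1])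
qed

lemma step_n:
  fixes \<sigma> :: "real \<Rightarrow> real^'d" and t :: "nat \<Rightarrow> real"
  assumes pin: "path_image \<sigma> \<subseteq> unit_cube" and S_in: "S \<in> unit_cube" and T_in: "T \<in> unit_cube"
    and mono: "mono_path \<sigma>"
    and ST: "\<And>i. \<delta>'' \<le> T$i - S$i" and dpos: "0 < \<delta>''" and d1: "\<delta>'' \<le> 1"
    and s0: "\<sigma> 0 = S" and s1: "\<sigma> 1 = T"
    and del: "0 < \<delta>" and tube_cube: "tube \<delta> \<sigma> \<subseteq> unit_cube"
    and lam: "0 < lm" "lm \<le> 1" "lm * real CARD('d) \<le> \<delta> / 4"
    and rho: "0 < \<rho>" "\<rho> \<le> r" "\<rho> \<le> \<delta> / 2"
    and Ndef: "N = nat \<lceil>3 * real CARD('d) / \<rho>\<rceil>" and adef: "a = lm * \<delta>'' / (2 * N)"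
    and t0: "t 0 = 0" and tN: "t N = 1"
    and tk: "\<And>k. k \<le> N \<Longrightarrow> 0 \<le> t k \<and> t k \<le> 1 \<and>
       (\<Sum>i\<in>UNIV. \<sigma> (t k) $ i) = (\<Sum>i\<in>UNIV. S$i) + real k / real N * (\<Sum>i\<in>UNIV. T$i - S$i)"
  shows "1 - real (card {1..<N}) * (1 - a ^ CARD('d)) ^ n \<le> inner_prob (sample_space n)
     {\<omega> \<in> space (sample_space n). \<exists>vs. mono_graph_path (\<omega> ` {..<n} \<union> {S, T}) r S T vs \<and>
        polygonal vs \<in> Sigma_paths S T \<and> path_image (polygonal vs) \<subseteq> tube \<delta> \<sigma>}"
proof -
  define D where "D = real CARD('d)"
  define L where "L = (\<Sum>i\<in>UNIV. T$i - S$i)"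
  define p where "p = (\<lambda>k. (1 - lm) *\<^sub>R \<sigma> (t k) + lm *\<^sub>R (S + (real k / real N) *\<^sub>R (T - S)))"
  define Q where "Q k = cbox (p k) (\<chi> i. p k $ i + a)" for k
  have D1: "1 \<le> D" unfolding D_def by simp
  have NR: "3 * D / \<rho> \<le> real N" unfolding Ndef D_def by linarith
  have "0 < 3 * D / \<rho>" using D1 rho(1) by simp
  then have Npos: "0 < real N" using NR by linarith
  then have N0: "N > 0" by simp
  have a0: "0 \<le> a" using lam dpos unfolding adef by simp
  have alt: "a < lm * \<delta>'' / N" unfolding adef using lam dpos Npos by (simp add: field_simps)
  have ahalf: "a \<le> 1 / (2 * N)" unfolding adef using lam dpos d1 Npos
    by (intro divide_right_mono) (auto intro: mult_le_one)
  have LD: "L \<le> D" unfolding L_def D_def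
  proof -
    have "(\<Sum>i\<in>UNIV. T$i - S$i) \<le> (\<Sum>i\<in>(UNIV::'d set). 1)"
    proof (intro sum_mono)
      fix i
      have "0 \<le> S$i" "T$i \<le> 1" using S_in T_in unfolding unit_cube_def by (auto simp: mem_box_cart)
      then show "T$i - S$i \<le> 1" by simp
    qed
    then show "(\<Sum>i\<in>UNIV. T$i - S$i) \<le> real CARD('d)" by simp
  qed
  have DN: "3 * D / N \<le> \<rho>" using NR rho(1) Npos by (simp add: field_simps)
  have "D * a \<le> D * (1 / (2 * N))" using ahalf D1 by (intro mult_left_mono) auto
  then have Da: "D * a \<le> D / (2 * N)" by simp
  have L0: "0 \<le> L" unfolding L_def using ST dpos by (intro sum_nonneg) (smt (verit))
  have LN: "L / N \<le> D / N" using LD Npos by (simp add: divide_right_mono)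
  have edge: "L / N + 2 * D * a \<le> r"
  proof -
    have "2 * D * a \<le> D / N" using Da by (simp add: field_simps)
    moreover have "D / N + D / N \<le> 3 * D / N" using D1 Npos by (simp add: field_simps)
    ultimately show ?thesis using LN DN rho by linarith
  qed
  have tubec: "L / N + 2 * D * a + (D * a + lm * D) < \<delta>"
  proof -
    have "3 * (D * a) \<le> 3 * (D / (2 * N))" using Da by simp
    moreover have "D / N + 3 * (D / (2 * N)) \<le> 3 * D / N" using D1 Npos by (simp add: field_simps)
    ultimately show ?thesis using LN DN rho lam(3) del unfolding D_def[symmetric] by (simp add: algebra_simps)
  qed
  define B where "B = {\<omega> \<in> space (sample_space n). \<forall>k\<in>{1..<N}. \<exists>j<n. \<omega> j \<in> Q k}"
  have Qsub: "Q k \<subseteq> unit_cube" if "k \<in> {1..<N}" for k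
  proof
    fix x assume x: "x \<in> Q k"
    define v where "v j = (if j = k then x else p j)" for j
    have vQ: "\<And>j. j \<le> N \<Longrightarrow> v j \<in> cbox (p j) (\<chi> i. p j $ i + a)"
      using x a0 unfolding v_def Q_def by (auto simp: mem_box_cart)
    have "dist (v k) (\<sigma> (t k)) \<le> real CARD('d) * a + lm * real CARD('d)"
      using det_geom(5)[OF pin S_in T_in mono ST dpos N0 t0 tN tk s0 s1 lam(1,2) a0 alt p_def vQ] that
      by auto
    moreover have "0 \<le> L / N + 2 * D * a" using L0 Npos a0 D1 by simp
    ultimately have "dist x (\<sigma> (t k)) < \<delta>" using tubec unfolding v_def D_def by (simp add: algebra_simps)
    moreover have "t k \<in> {0..1}" using tk[of k] that by auto
    ultimately have "x \<in> tube \<delta> \<sigma>" unfolding tube_def by (auto simp: dist_commute)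
    then show "x \<in> unit_cube" using tube_cube by auto
  qed
  have Qmeas: "measure lborel (Q k) \<ge> a ^ CARD('d)" for k
  proof -
    have "p k \<in> cbox (p k) (\<chi> i. p k $ i + a)" using a0 by (auto simp: mem_box_cart)
    then have "cbox (p k) (\<chi> i. p k $ i + a) \<noteq> {}" by blast
    then have "measure lborel (Q k) = (\<Prod>i\<in>(UNIV::'d set). a)" unfolding Q_def
      by (subst content_cbox_cart) auto
    then show ?thesis by simp
  qed
  have PB: "measure (sample_space n) B \<ge> 1 - real (card {1..<N}) * (1 - a ^ CARD('d)) ^ n"
    unfolding B_def by (rule prob_bound) (use Qsub Qmeas in \<open>auto simp: Q_def\<close>)
  have Bs: "B \<in> sets (sample_space n)" unfolding B_def by (rule ev_meas) (auto simp: Q_def)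
  have "B \<subseteq> {\<omega> \<in> space (sample_space n). \<exists>vs. mono_graph_path (\<omega> ` {..<n} \<union> {S, T}) r S T vs \<and>
        polygonal vs \<in> Sigma_paths S T \<and> path_image (polygonal vs) \<subseteq> tube \<delta> \<sigma>}"
  proof
    fix \<omega> assume "\<omega> \<in> B"
    then have sp: "\<omega> \<in> space (sample_space n)" and hit: "\<forall>k\<in>{1..<N}. \<exists>j<n. \<omega> j \<in> cbox (p k) (\<chi> i. p k $ i + a)"
      unfolding B_def Q_def by auto
    have "\<exists>vs. mono_graph_path (\<omega> ` {..<n} \<union> {S, T}) r S T vs \<and> polygonal vs \<in> Sigma_paths S T \<and>
     path_image (polygonal vs) \<subseteq> tube \<delta> \<sigma>"
      by (rule det_graph[OF pin S_in T_in mono ST dpos N0 t0 tN tk s0 s1 lam(1,2) a0 alt p_def hit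
          edge[unfolded L_def D_def] tubec[unfolded L_def D_def] tube_cube])
    then show "\<omega> \<in> {\<omega> \<in> space (sample_space n). \<exists>vs. mono_graph_path (\<omega> ` {..<n} \<union> {S, T}) r S T vs \<and>
        polygonal vs \<in> Sigma_paths S T \<and> path_image (polygonal vs) \<subseteq> tube \<delta> \<sigma>}" using sp by auto
  qed
  from inner_ge[OF P_prob Bs this] PB show ?thesis by linarith
qed


lemma numeric:
  fixes n N d :: nat and D \<rho> K c lm dd a :: real
  assumes d: "d \<ge> 1" and Dd: "D = real d" and n: "n \<ge> 3"
    and rho: "0 < \<rho>" "\<rho> \<le> 1/2" and rhod: "K ^ d * (ln n / n) \<le> \<rho> ^ d"
    and K: "0 < K" and cK: "c * K = 2" and cdef: "c = lm * dd / (12 * D)"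
    and lmdd: "0 < lm * dd" "lm * dd \<le> 1"
    and Ndef: "N = nat \<lceil>3 * D / \<rho>\<rceil>" and adef: "a = lm * dd / (2 * N)"
  shows "real (card {1..<N}) * (1 - a ^ d) ^ n \<le> (6 * D / K) ^ d / n"
proof -
  have D1: "1 \<le> D" using d Dd by simp
  have x0: "0 < ln n / n" using n by (simp add: divide_pos_pos)
  have ln1: "1 \<le> ln (real n)"
  proof -
    have "1 \<le> ln (3::real)" using exp_le by (simp add: ln_ge_iff)
    also have "\<dots> \<le> ln (real n)" using n by simp
    finally show ?thesis .
  qed
  have R6: "6 \<le> 3 * D / \<rho>" using D1 rho by (simp add: field_simps)
  have "0 \<le> \<lceil>3 * D / \<rho>\<rceil>" using R6 by linarith
  then have Nc: "real N = of_int \<lceil>3 * D / \<rho>\<rceil>" unfolding Ndef by simp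
  have NR: "3 * D / \<rho> \<le> real N" "real N \<le> 3 * D / \<rho> + 1" unfolding Nc by linarith+
  have "6 * D / \<rho> = 3 * D / \<rho> + 3 * D / \<rho>" by (simp add: field_simps)
  then have N6: "real N \<le> 6 * D / \<rho>" using NR R6 by linarith
  have Npos: "0 < real N" using NR R6 by linarith
  have a0: "0 < a" unfolding adef using lmdd Npos by simp
  have a1: "a \<le> 1" unfolding adef using lmdd Npos NR R6 by (simp add: field_simps)
  have ac: "c * \<rho> \<le> a"
  proof -
    have "c * \<rho> = lm * dd / (2 * (6 * D / \<rho>))" unfolding cdef using rho D1 by (simp add: field_simps)
    also have "\<dots> \<le> lm * dd / (2 * N)" using lmdd Npos N6 D1 rho
      by (intro divide_left_mono) (auto intro: mult_pos_pos)
    finally show ?thesis unfolding adef .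
  qed
  have c0: "0 < c" unfolding cdef using lmdd D1 by simp
  have "(c * \<rho>) ^ d \<le> a ^ d" using ac c0 rho by (intro power_mono) auto
  moreover have "(c * \<rho>) ^ d \<ge> 2 ^ d * (ln n / n)"
  proof -
    have "(c * \<rho>) ^ d = c ^ d * \<rho> ^ d" by (simp add: power_mult_distrib)
    also have "\<dots> \<ge> c ^ d * (K ^ d * (ln n / n))" using rhod c0 by (intro mult_left_mono) auto
    finally show ?thesis using cK by (simp add: power_mult_distrib[symmetric] mult.assoc[symmetric])
  qed
  moreover have "2 ^ d * (ln n / n) \<ge> 2 * (ln n / n)"
  proof -
    have "(2::real) \<le> 2 ^ d" using d by (metis power_increasing power_one_right one_le_numeral)
    then show ?thesis using x0 by (intro mult_right_mono) auto
  qed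
  ultimately have ad: "2 * (ln n / n) \<le> a ^ d" by linarith
  have "(1 - a ^ d) ^ n \<le> exp (- (a ^ d)) ^ n"
    using a0 a1 by (intro power_mono) (auto simp: power_le_one intro: order_trans[OF _ exp_ge_add_one_self])
  also have "\<dots> = exp (- (real n * a ^ d))" by (simp add: exp_of_nat_mult[symmetric])
  also have "\<dots> \<le> exp (- (2 * ln n))"
  proof -
    have "2 * ln n \<le> real n * a ^ d" using ad n by (simp add: field_simps)
    then show ?thesis by simp
  qed
  also have "\<dots> = 1 / (real n) ^ 2"
  proof -
    have "exp (2 * ln (real n)) = (real n) ^ 2" using n exp_of_nat_mult[of 2 "ln (real n)"] by simp
    then show ?thesis by (simp add: exp_minus field_simps)
  qed
  finally have e: "(1 - a ^ d) ^ n \<le> 1 / (real n) ^ 2" .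
  have "real (card {1..<N}) \<le> real N" by simp
  also have "\<dots> \<le> real N ^ d" using Npos NR R6 d
    by (metis One_nat_def less_one not_less of_nat_1 of_nat_le_iff power_increasing power_one_right
        linorder_not_le nat_less_le of_nat_0_less_iff Suc_leI)
  also have "\<dots> \<le> (6 * D / \<rho>) ^ d" using N6 Npos by (intro power_mono) auto
  also have "\<dots> = (6 * D) ^ d / \<rho> ^ d" by (simp add: power_divide)
  also have "\<dots> \<le> (6 * D) ^ d / (K ^ d * (ln n / n))"
  proof (rule divide_left_mono)
    show "K ^ d * (ln n / n) \<le> \<rho> ^ d" by (rule rhod)
    show "0 \<le> (6 * D) ^ d" using D1 by simp
    show "0 < \<rho> ^ d * (K ^ d * (ln n / n))" using rho K x0 by (intro mult_pos_pos) auto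
  qed
  also have "\<dots> = (6 * D / K) ^ d * (real n / ln n)" using x0 K by (simp add: power_divide field_simps)
  also have "\<dots> \<le> (6 * D / K) ^ d * real n"
    using ln1 K D1 n by (intro mult_left_mono) (auto simp: field_simps)
  finally have cN: "real (card {1..<N}) \<le> (6 * D / K) ^ d * real n" .
  have "real (card {1..<N}) * (1 - a ^ d) ^ n \<le> (6 * D / K) ^ d * real n * (1 / (real n) ^ 2)"
  proof (rule mult_mono[OF cN e])
    have "a ^ d \<le> 1" using a0 a1 by (simp add: power_le_one)
    then show "0 \<le> (1 - a ^ d) ^ n" by simp
  qed (use D1 K in auto)
  also have "\<dots> = (6 * D / K) ^ d / n" using n by (simp add: power2_eq_square)
  finally show ?thesis .
qed


lemma KL:
  fixes \<sigma> :: "real \<Rightarrow> real^'d" and r :: "nat \<Rightarrow> real"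
  assumes pth: "path \<sigma>" and pin: "path_image \<sigma> \<subseteq> unit_cube" and S_in: "S \<in> unit_cube" and T_in: "T \<in> unit_cube"
    and mono: "mono_path \<sigma>"
    and ST: "\<And>i. \<delta>'' \<le> T$i - S$i" and dpos: "0 < \<delta>''" and d1: "\<delta>'' \<le> 1"
    and s0: "\<sigma> 0 = S" and s1: "\<sigma> 1 = T"
    and del: "0 < \<delta>" and tube_cube: "tube \<delta> \<sigma> \<subseteq> unit_cube"
    and rn: "filterlim (\<lambda>n. r n / (ln (real n) / real n) powr (1 / real CARD('d))) at_top at_top"
  shows "(\<lambda>n. inner_prob (sample_space n) {\<omega> \<in> space (sample_space n). \<exists>vs.
          mono_graph_path (\<omega> ` {..<n} \<union> {S, T}) (r n) S T vs \<and>
          polygonal vs \<in> Sigma_paths S T \<and> path_image (polygonal vs) \<subseteq> tube \<delta> \<sigma>}) \<longlonglongrightarrow> 1"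
proof -
  define d where "d = CARD('d)"
  define D where "D = real d"
  define \<delta>0 where "\<delta>0 = min \<delta> 1"
  define lm where "lm = min 1 (\<delta>0 / (4 * D))"
  define c where "c = lm * \<delta>'' / (12 * D)"
  define K where "K = 2 / c"
  define C where "C = (6 * D / K) ^ d"
  define E where "E n = {\<omega> \<in> space (sample_space n). \<exists>vs.
          mono_graph_path (\<omega> ` {..<n} \<union> {S, T}) (r n) S T vs \<and>
          polygonal vs \<in> Sigma_paths S T \<and> path_image (polygonal vs) \<subseteq> tube \<delta> \<sigma>}" for n
  have d1': "d \<ge> 1" unfolding d_def by simp
  have D1: "1 \<le> D" unfolding D_def using d1' by simp
  have d00: "0 < \<delta>0" "\<delta>0 \<le> 1" "\<delta>0 \<le> \<delta>" unfolding \<delta>0_def using del by auto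
  have lm0: "0 < lm" "lm \<le> 1" unfolding lm_def using d00 D1 by auto
  have lmD: "lm * D \<le> \<delta> / 4"
  proof -
    have "lm * D \<le> (\<delta>0 / (4 * D)) * D" unfolding lm_def using D1 by (intro mult_right_mono) auto
    also have "\<dots> = \<delta>0 / 4" using D1 by (simp add: field_simps)
    finally show ?thesis using d00 by linarith
  qed
  have lmdd: "0 < lm * \<delta>''" "lm * \<delta>'' \<le> 1" using lm0 dpos d1 by (auto intro: mult_le_one)
  have c0: "0 < c" unfolding c_def using lmdd D1 by simp
  have K0: "0 < K" unfolding K_def using c0 by simp
  have cK: "c * K = 2" unfolding K_def using c0 by simp
  have pST: "preceq S T" unfolding preceq_def using ST dpos by (smt (verit))
  have "\<forall>N. \<exists>t. N > 0 \<longrightarrow> (t 0 = 0 \<and> t N = 1 \<and> (\<forall>k\<le>N. 0 \<le> t k \<and> t k \<le> 1 \<and>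
     (\<Sum>i\<in>UNIV. \<sigma> (t k) $ i) = (\<Sum>i\<in>UNIV. S$i) + real k / real N * (\<Sum>i\<in>UNIV. T$i - S$i)))"
    using levels[OF pth s0 s1 _ pST] by blast
  then obtain tt where tt: "\<And>N. N > 0 \<Longrightarrow> tt N 0 = 0 \<and> tt N N = 1 \<and> (\<forall>k\<le>N. 0 \<le> tt N k \<and> tt N k \<le> 1 \<and>
     (\<Sum>i\<in>UNIV. \<sigma> (tt N k) $ i) = (\<Sum>i\<in>UNIV. S$i) + real k / real N * (\<Sum>i\<in>UNIV. T$i - S$i))"
    by metis
  have ev1: "eventually (\<lambda>n. n \<ge> 3) sequentially" by (rule eventually_ge_at_top)
  have ev2: "eventually (\<lambda>n. K \<le> r n / (ln (real n) / real n) powr (1 / real CARD('d))) sequentially"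
    using rn unfolding filterlim_at_top by blast
  have lim0: "(\<lambda>n. ln (real n) / real n) \<longlonglongrightarrow> 0"
    using filterlim_compose[OF ln_x_over_x_tendsto_0 filterlim_real_sequentially] by simp
  have "0 < (\<delta>0 / 2) ^ d / K ^ d" using d00 K0 by simp
  from order_tendstoD(2)[OF lim0 this]
  have ev3: "eventually (\<lambda>n. ln (real n) / real n < (\<delta>0 / 2) ^ d / K ^ d) sequentially" .
  have low: "eventually (\<lambda>n. 1 - C / real n \<le> inner_prob (sample_space n) (E n)) sequentially"
    using ev1 ev2 ev3
  proof eventually_elim
    case (elim n)
    define x where "x = ln (real n) / real n"
    define y where "y = x powr (1 / D)"
    have x0: "0 < x" unfolding x_def using elim(1) by (simp add: divide_pos_pos)
    have y0: "0 < y" unfolding y_def using x0 by simp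
    have yd: "y ^ d = x"
    proof -
      have "y ^ d = y powr D" using y0 unfolding D_def by (simp add: powr_realpow)
      also have "\<dots> = x powr (1 / D * D)" unfolding y_def by (rule powr_powr)
      also have "\<dots> = x" using D1 x0 by simp
      finally show ?thesis .
    qed
    have rK: "K * y \<le> r n" using elim(2) y0 unfolding y_def x_def D_def d_def
      by (simp add: pos_le_divide_eq)
    define \<rho> where "\<rho> = min (r n) (\<delta>0 / 2)"
    have rho0: "0 < \<rho>" unfolding \<rho>_def using rK K0 y0 d00
      by (metis min_less_iff_conj half_gt_zero mult_pos_pos order_less_le_trans)
    have rho1: "\<rho> \<le> 1 / 2" "\<rho> \<le> r n" "\<rho> \<le> \<delta> / 2" unfolding \<rho>_def using d00 by auto
    have rhod: "K ^ d * x \<le> \<rho> ^ d"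
    proof (cases "r n \<le> \<delta>0 / 2")
      case True
      then have "\<rho> = r n" unfolding \<rho>_def by simp
      moreover have "(K * y) ^ d \<le> r n ^ d" using rK K0 y0 by (intro power_mono) auto
      ultimately show ?thesis using yd by (simp add: power_mult_distrib)
    next
      case False
      then have "\<rho> = \<delta>0 / 2" unfolding \<rho>_def by simp
      moreover have "K ^ d * x < (\<delta>0 / 2) ^ d" using elim(3) K0 unfolding x_def
        by (simp add: pos_less_divide_eq mult.commute)
      ultimately show ?thesis by (metis less_imp_le)
    qed
    define N where "N = nat \<lceil>3 * D / \<rho>\<rceil>"
    define a where "a = lm * \<delta>'' / (2 * N)"
    have "0 < 3 * D / \<rho>" using D1 rho0 by simp
    then have N0: "N > 0" unfolding N_def by simp
    have ttN: "tt N 0 = 0" "tt N N = 1" "\<And>k. k \<le> N \<Longrightarrow> 0 \<le> tt N k \<and> tt N k \<le> 1 \<and>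
     (\<Sum>i\<in>UNIV. \<sigma> (tt N k) $ i) = (\<Sum>i\<in>UNIV. S$i) + real k / real N * (\<Sum>i\<in>UNIV. T$i - S$i)"
      using tt[OF N0] by auto
    have sn: "1 - real (card {1..<N}) * (1 - a ^ CARD('d)) ^ n \<le> inner_prob (sample_space n) (E n)"
      unfolding E_def
      by (rule step_n[OF pin S_in T_in mono ST dpos d1 s0 s1 del tube_cube lm0 lmD[unfolded D_def d_def]
            rho0 rho1(2,3) N_def[unfolded D_def d_def] a_def ttN])
    have "real (card {1..<N}) * (1 - a ^ d) ^ n \<le> (6 * D / K) ^ d / n"
      by (rule numeric[OF d1' D_def elim(1) rho0 rho1(1) rhod[unfolded x_def] K0 cK c_def lmdd N_def a_def])
    then show ?case using sn unfolding C_def d_def by simp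
  qed
  have up: "eventually (\<lambda>n. inner_prob (sample_space n) (E n) \<le> 1) sequentially"
    by (intro always_eventually allI inner_le1 P_prob)
  have "(\<lambda>n. 1 - C / real n) \<longlonglongrightarrow> 1 - 0" by (intro tendsto_intros)
  then have "(\<lambda>n. inner_prob (sample_space n) (E n)) \<longlonglongrightarrow> 1"
    using tendsto_sandwich[OF low up] by simp
  then show ?thesis unfolding E_def .
qed


lemma diag:
  fixes g :: "nat \<Rightarrow> nat \<Rightarrow> real"
  assumes lim: "\<And>m. (\<lambda>n. g m n) \<longlonglongrightarrow> 1" and le: "\<And>m n. g m n \<le> 1"
  shows "\<exists>h. filterlim h at_top sequentially \<and> (\<lambda>n. g (h n) n) \<longlonglongrightarrow> 1"
proof -
  have "\<forall>m. \<exists>N. \<forall>n\<ge>N. 1 - 1 / real (Suc m) < g m n"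
  proof
    fix m
    have "1 - 1 / real (Suc m) < 1" by simp
    from order_tendstoD(1)[OF lim[of m] this]
    show "\<exists>N. \<forall>n\<ge>N. 1 - 1 / real (Suc m) < g m n" unfolding eventually_sequentially .
  qed
  then obtain N where N: "\<And>m n. n \<ge> N m \<Longrightarrow> 1 - 1 / real (Suc m) < g m n" by metis
  define A where "A n = {m. m \<le> n \<and> N m \<le> n}" for n
  define h where "h n = (if A n = {} then 0 else Max (A n))" for n
  have finA: "finite (A n)" for n unfolding A_def by auto
  have hA: "h n \<in> A n" if "n \<ge> N 0" for n
  proof -
    have "0 \<in> A n" unfolding A_def using that by auto
    then have "A n \<noteq> {}" by auto
    then show ?thesis unfolding h_def using Max_in[OF finA] by auto
  qed
  have hge: "M \<le> h n" if "n \<ge> M + N M + N 0" for M n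
  proof -
    have "M \<in> A n" unfolding A_def using that by auto
    then have "A n \<noteq> {}" by auto
    then show ?thesis unfolding h_def using Max_ge[OF finA \<open>M \<in> A n\<close>] by auto
  qed
  have hlim: "filterlim h at_top sequentially"
    unfolding filterlim_at_top eventually_sequentially using hge by blast
  have l1: "(\<lambda>m. 1 - 1 / real (Suc m)) \<longlonglongrightarrow> 1 - 0"
    by (intro tendsto_intros LIMSEQ_Suc[OF lim_const_over_n])
  have l2: "(\<lambda>n. 1 - 1 / real (Suc (h n))) \<longlonglongrightarrow> 1"
    using filterlim_compose[OF l1 hlim] by simp
  have low: "eventually (\<lambda>n. 1 - 1 / real (Suc (h n)) \<le> g (h n) n) sequentially"
    unfolding eventually_sequentially
  proof (intro exI allI impI)
    fix n assume "n \<ge> N 0"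
    then have "N (h n) \<le> n" using hA unfolding A_def by auto
    then show "1 - 1 / real (Suc (h n)) \<le> g (h n) n" using N by (simp add: less_imp_le)
  qed
  have "(\<lambda>n. g (h n) n) \<longlonglongrightarrow> 1"
    by (rule tendsto_sandwich[OF low _ l2 tendsto_const]) (simp add: le)
  then show ?thesis using hlim by blast
qed

lemma tube_mono: "r1 \<le> r2 \<Longrightarrow> tube r1 \<sigma> \<subseteq> tube r2 \<sigma>"
  unfolding tube_def by auto

theorem theorem4:
  fixes M :: "real^'d \<Rightarrow> real" and S T :: "real^'d"
    and \<sigma>s :: "real \<Rightarrow> real^'d" and r :: "nat \<Rightarrow> real" and \<delta>' \<delta>'' :: real
  assumes dim: "CARD('d) \<ge> 2"
    and S_in: "S \<in> unit_cube" and T_in: "T \<in> unit_cube"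
    and opt: "robustly_optimal_monotone M S T \<sigma>s"
    and d1: "\<delta>' > 0" and tube_in: "tube \<delta>' \<sigma>s \<subseteq> unit_cube"
    and d2: "0 < \<delta>''" "\<delta>'' \<le> 1" and ST: "preceq_delta S \<delta>'' T"
    and rn: "filterlim (\<lambda>n. r n / (ln (real n) / real n) powr (1 / real CARD('d))) at_top at_top"
  shows "\<exists>\<epsilon>::nat \<Rightarrow> real. \<epsilon> \<longlonglongrightarrow> 0 \<and>
    (\<lambda>n. inner_prob (sample_space n)
       {\<omega> \<in> space (sample_space n). \<exists>vs.
          mono_graph_path (\<omega> ` {..<n} \<union> {S, T}) (r n) S T vs \<and>
          polygonal vs \<in> Sigma_paths S T \<and>
          bcost M (polygonal vs) \<le> ereal (1 + \<epsilon> n) * bcost M \<sigma>s}) \<longlonglongrightarrow> 1"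
proof -
  have rob: "robust M S T \<sigma>s" and mono: "mono_path \<sigma>s"
    using opt unfolding robustly_optimal_monotone_def by auto
  have sig: "\<sigma>s \<in> Sigma_paths S T" using rob unfolding robust_def by auto
  have pth: "path \<sigma>s" and pin: "path_image \<sigma>s \<subseteq> unit_cube" and s0: "\<sigma>s 0 = S" and s1: "\<sigma>s 1 = T"
    using sig unfolding Sigma_paths_def pathstart_def pathfinish_def by auto
  have STi: "\<delta>'' \<le> T$i - S$i" for i
    using ST unfolding preceq_delta_def by (auto intro: Min_le)
  have "\<forall>m. \<exists>\<delta>>0. \<forall>\<sigma>'\<in>Sigma_paths S T. path_image \<sigma>' \<subseteq> tube \<delta> \<sigma>s \<longrightarrow>
      bcost M \<sigma>' \<le> ereal (1 + 1 / real (Suc m)) * bcost M \<sigma>s"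
    using rob unfolding robust_def by auto
  then obtain \<delta>f where \<delta>f: "\<And>m. \<delta>f m > 0" "\<And>m \<sigma>'. \<sigma>' \<in> Sigma_paths S T \<Longrightarrow> path_image \<sigma>' \<subseteq> tube (\<delta>f m) \<sigma>s \<Longrightarrow>
      bcost M \<sigma>' \<le> ereal (1 + 1 / real (Suc m)) * bcost M \<sigma>s"
    by metis
  define g where "g m n = inner_prob (sample_space n)
       {\<omega> \<in> space (sample_space n). \<exists>vs.
          mono_graph_path (\<omega> ` {..<n} \<union> {S, T}) (r n) S T vs \<and>
          polygonal vs \<in> Sigma_paths S T \<and>
          bcost M (polygonal vs) \<le> ereal (1 + 1 / real (Suc m)) * bcost M \<sigma>s}" for m n
  have gle: "g m n \<le> 1" for m n unfolding g_def by (rule inner_le1[OF P_prob])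
  have glim: "(\<lambda>n. g m n) \<longlonglongrightarrow> 1" for m
  proof -
    define \<delta> where "\<delta> = min (\<delta>f m) \<delta>'"
    have del: "0 < \<delta>" unfolding \<delta>_def using \<delta>f(1)[of m] d1 by simp
    have tc: "tube \<delta> \<sigma>s \<subseteq> unit_cube" using tube_mono[of \<delta> \<delta>' \<sigma>s] tube_in unfolding \<delta>_def by auto
    have K: "(\<lambda>n. inner_prob (sample_space n) {\<omega> \<in> space (sample_space n). \<exists>vs.
          mono_graph_path (\<omega> ` {..<n} \<union> {S, T}) (r n) S T vs \<and>
          polygonal vs \<in> Sigma_paths S T \<and> path_image (polygonal vs) \<subseteq> tube \<delta> \<sigma>s}) \<longlonglongrightarrow> 1"
      by (rule KL[OF pth pin S_in T_in mono STi d2(1) d2(2) s0 s1 del tc rn])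
    have low: "inner_prob (sample_space n) {\<omega> \<in> space (sample_space n). \<exists>vs.
          mono_graph_path (\<omega> ` {..<n} \<union> {S, T}) (r n) S T vs \<and>
          polygonal vs \<in> Sigma_paths S T \<and> path_image (polygonal vs) \<subseteq> tube \<delta> \<sigma>s} \<le> g m n" for n
      unfolding g_def
    proof (rule inner_mono[OF P_prob], safe)
      fix \<omega> vs
      assume a: "\<omega> \<in> space (sample_space n)" "mono_graph_path (\<omega> ` {..<n} \<union> {S, T}) (r n) S T vs"
        "polygonal vs \<in> Sigma_paths S T" "path_image (polygonal vs) \<subseteq> tube \<delta> \<sigma>s"
      have "path_image (polygonal vs) \<subseteq> tube (\<delta>f m) \<sigma>s"
        using a(4) tube_mono[of \<delta> "\<delta>f m" \<sigma>s] unfolding \<delta>_def by auto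
      then have "bcost M (polygonal vs) \<le> ereal (1 + 1 / real (Suc m)) * bcost M \<sigma>s"
        using \<delta>f(2) a(3) by blast
      then show "\<exists>vs. mono_graph_path (\<omega> ` {..<n} \<union> {S, T}) (r n) S T vs \<and>
          polygonal vs \<in> Sigma_paths S T \<and>
          bcost M (polygonal vs) \<le> ereal (1 + 1 / real (Suc m)) * bcost M \<sigma>s" using a by blast
    qed
    show ?thesis
      by (rule tendsto_sandwich[OF _ _ K tendsto_const]) (use low gle in auto)
  qed
  obtain h where h: "filterlim h at_top sequentially" "(\<lambda>n. g (h n) n) \<longlonglongrightarrow> 1"
    using diag[of g] glim gle by blast
  have l0: "(\<lambda>m. 1 / real (Suc m)) \<longlonglongrightarrow> 0" by (rule LIMSEQ_Suc[OF lim_const_over_n])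
  have eps: "(\<lambda>n. 1 / real (Suc (h n))) \<longlonglongrightarrow> 0"
    using filterlim_compose[OF l0 h(1)] by simp
  show ?thesis
    by (rule exI[of _ "\<lambda>n. 1 / real (Suc (h n))"]) (use eps h(2) in \<open>simp add: g_def\<close>)
qed


end
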